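(* Let $n\ge 3$, $c\ge 1$, and let $\upsilon: UV_n(c)\to\mathrm{GL}_n(\mathbb{C})$ be the representation \[ \upsilon(\rho_i)=\mathrm{diag}\Big(I_{i-1},\begin{pmatrix}0&r_2\\ \frac1{r_2}&0\end{pmatrix},I_{n-i-1}\Big),\qquad \upsilon(\sigma_{i,t})=\mathrm{diag}\Big(I_{i-1},\begin{pmatrix}s_{1,t}&s_{2,t}\\ s_{3,t}&s_{4,t}\end{pmatrix},I_{n-i-1}\Big) \] ($1\le i\le n-1$, $1\le t\le c$) with $r_2\neq0$ and $s_{1,t}s_{4,t}-s_{2,t}s_{3,t}\ne 0$. Then $\upsilon$ is equivalent to a representation $\upsilon'$ of the form \[ \upsilon'(\rho_i)=\mathrm{diag}\Big(I_{i-1},\begin{pmatrix}0&1\\ 1&0\end{pmatrix},I_{n-i-1}\Big),\qquad \upsilon'(\sigma_{i,t})=\mathrm{diag}\Big(I_{i-1},\begin{pmatrix}s'_{1,t}&s'_{2,t}\\ s'_{3,t}&s'_{4,t}\end{pmatrix},I_{n-i-1}\Big) \] for all $1\le i\le n-1$, $1\le t\le c$, with complex numbers $s'_{j,t}$ satisfying $s'_{1,t}s'_{4,t}-s'_{2,t}s'_{3,t}\neq 0$.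
   Context: $UV_n(c)$ is the group with generators $\rho_i$ ($1\le i\le n-1$), $\sigma_{i,t}$ ($1\le i\le n-1$, $1\le t\le c$) and relations $\rho_i\rho_{i+1}\rho_i=\rho_{i+1}\rho_i\rho_{i+1}$, $\rho_i\rho_j=\rho_j\rho_i$ ($|i-j|\ge2$), $\rho_i^2=1$, $\sigma_{i,t}\sigma_{j,\ell}=\sigma_{j,\ell}\sigma_{i,t}$ ($|i-j|\ge2$), $\sigma_{i,t}\rho_j=\rho_j\sigma_{i,t}$ ($|i-j|\ge2$), $\rho_i\rho_{i+1}\sigma_{i,t}=\sigma_{i+1,t}\rho_i\rho_{i+1}$ ($1\le i\le n-2$). $\mathrm{diag}(\cdot,\cdot,\cdot)$ denotes a block diagonal matrix and $I_r$ the $r\times r$ identity. Two representations are equivalent if they are conjugate by a fixed invertible matrix. *)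

theory Defs
  imports "Jordan_Normal_Form.Matrix"
begin

text \<open>Block diagonal matrix diag(I_{i-1}, [[a,b],[c,d]], I_{n-i-1}) of size n,
  with the 2x2 block in rows/columns i, i+1 (1-based), i.e. i-1, i (0-based).\<close>
definition blk :: "nat \<Rightarrow> nat \<Rightarrow> complex \<Rightarrow> complex \<Rightarrow> complex \<Rightarrow> complex \<Rightarrow> complex mat" where
  "blk n i a b c d = mat n n (\<lambda>(j,k).
     if j = i - 1 \<and> k = i - 1 then a
     else if j = i - 1 \<and> k = i then b
     else if j = i \<and> k = i - 1 then c
     else if j = i \<and> k = i then d
     else if j = k then 1 else 0)"

definition UV_rep :: "nat \<Rightarrow> nat \<Rightarrow> (nat \<Rightarrow> complex mat) \<Rightarrow> (nat \<Rightarrow> nat \<Rightarrow> complex mat) \<Rightarrow> bool" where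
  "UV_rep n c R S \<longleftrightarrow>
    (\<forall>i\<in>{1..n-1}. R i \<in> carrier_mat n n \<and> invertible_mat (R i)) \<and>
    (\<forall>i\<in>{1..n-1}. \<forall>t\<in>{1..c}. S i t \<in> carrier_mat n n \<and> invertible_mat (S i t)) \<and>
    (\<forall>i\<in>{1..n-2}. R i * R (i+1) * R i = R (i+1) * R i * R (i+1)) \<and>
    (\<forall>i\<in>{1..n-1}. \<forall>j\<in>{1..n-1}. (i + 2 \<le> j \<or> j + 2 \<le> i) \<longrightarrow> R i * R j = R j * R i) \<and>
    (\<forall>i\<in>{1..n-1}. R i * R i = 1\<^sub>m n) \<and>
    (\<forall>i\<in>{1..n-1}. \<forall>j\<in>{1..n-1}. \<forall>t\<in>{1..c}. \<forall>l\<in>{1..c}.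
        (i + 2 \<le> j \<or> j + 2 \<le> i) \<longrightarrow> S i t * S j l = S j l * S i t) \<and>
    (\<forall>i\<in>{1..n-1}. \<forall>j\<in>{1..n-1}. \<forall>t\<in>{1..c}.
        (i + 2 \<le> j \<or> j + 2 \<le> i) \<longrightarrow> S i t * R j = R j * S i t) \<and>
    (\<forall>i\<in>{1..n-2}. \<forall>t\<in>{1..c}. R i * R (i+1) * S i t = S (i+1) t * R i * R (i+1))"

text \<open>Equivalence of two representations: conjugate by a fixed invertible matrix
  (it suffices to check this on the generators).\<close>
definition UV_equiv :: "nat \<Rightarrow> nat \<Rightarrow> (nat \<Rightarrow> complex mat) \<Rightarrow> (nat \<Rightarrow> nat \<Rightarrow> complex mat)
    \<Rightarrow> (nat \<Rightarrow> complex mat) \<Rightarrow> (nat \<Rightarrow> nat \<Rightarrow> complex mat) \<Rightarrow> bool" where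
  "UV_equiv n c R S R' S' \<longleftrightarrow>
    (\<exists>P Q. P \<in> carrier_mat n n \<and> Q \<in> carrier_mat n n \<and> P * Q = 1\<^sub>m n \<and> Q * P = 1\<^sub>m n \<and>
      (\<forall>i\<in>{1..n-1}. R' i = Q * R i * P) \<and>
      (\<forall>i\<in>{1..n-1}. \<forall>t\<in>{1..c}. S' i t = Q * S i t * P))"

end

theory Submission imports Defs begin
definition dg :: "nat \<Rightarrow> (nat \<Rightarrow> complex) \<Rightarrow> complex mat" where
 "dg n g = mat n n (\<lambda>(a,b). if a = b then g a else 0)"

lemma dg_carrier[simp]: "dg n g \<in> carrier_mat n n" by (simp add: dg_def)

lemma dg_dims[simp]: "dim_row (dg n g) = n" "dim_col (dg n g) = n" by (simp_all add: dg_def)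

lemma dg_entry: "i<n \<Longrightarrow> j<n \<Longrightarrow> dg n h $$ (i,j) = (if i=j then h i else 0)"
  by (simp add: dg_def)

lemma dg_left: "A \<in> carrier_mat n m \<Longrightarrow> j<n \<Longrightarrow> k<m \<Longrightarrow> (dg n g * A) $$ (j,k) = g j * A$$(j,k)"
proof -
  assume a: "A \<in> carrier_mat n m" "j<n" "k<m"
  have "(dg n g * A) $$ (j,k) = (\<Sum>i\<in>{0..<n}. (if j = i then g j else 0) * A$$(i,k))"
    using a by (simp add: dg_def index_mult_mat scalar_prod_def row_def col_def)
  also have "(\<lambda>i. (if j = i then g j else 0) * A$$(i,k)) = (\<lambda>i. if j = i then g j * A$$(j,k) else 0)"
    by auto
  finally show ?thesis using a by simp
qed

lemma dg_right: "A \<in> carrier_mat m n \<Longrightarrow> j<m \<Longrightarrow> k<n \<Longrightarrow> (A * dg n g) $$ (j,k) = A$$(j,k) * g k"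
proof -
  assume a: "A \<in> carrier_mat m n" "j<m" "k<n"
  have "(A * dg n g) $$ (j,k) = (\<Sum>i\<in>{0..<n}. A$$(j,i) * (if i = k then g i else 0))"
    using a by (simp add: dg_def index_mult_mat scalar_prod_def row_def col_def)
  also have "(\<lambda>i. A$$(j,i) * (if i = k then g i else 0)) = (\<lambda>i. if k = i then A$$(j,k) * g k else 0)"
    by auto
  finally show ?thesis using a by simp
qed

lemma blk_carrier[simp]: "blk n i a b c d \<in> carrier_mat n n" by (simp add: blk_def)

lemma conj_blk:
  assumes "1 \<le> i" "i < n" "\<And>k. k < n \<Longrightarrow> g k * f k = 1"
  shows "dg n g * blk n i a b c d * dg n f = blk n i a (g (i-1) * b * f i) (g i * c * f (i-1)) d"
proof (rule eq_matI)
  fix j k assume jk: "j < dim_row (blk n i a (g (i-1) * b * f i) (g i * c * f (i-1)) d)"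
     "k < dim_col (blk n i a (g (i-1) * b * f i) (g i * c * f (i-1)) d)"
  hence j: "j<n" and k: "k<n" by (auto simp: blk_def)
  have m: "dg n g * blk n i a b c d \<in> carrier_mat n n" by (rule mult_carrier_mat[OF dg_carrier blk_carrier])
  have "(dg n g * blk n i a b c d * dg n f) $$ (j,k) = (dg n g * blk n i a b c d) $$ (j,k) * f k"
    by (rule dg_right[OF m j k])
  also have "(dg n g * blk n i a b c d) $$ (j,k) = g j * blk n i a b c d $$ (j,k)"
    by (rule dg_left[OF blk_carrier j k])
  also have "g j * blk n i a b c d $$ (j,k) * f k = blk n i a (g (i-1) * b * f i) (g i * c * f (i-1)) d $$ (j,k)"
  proof -
    have gfx: "\<And>j x. j < n \<Longrightarrow> g j * x * f j = x"
      using assms(3) by (metis mult.commute mult.left_commute mult.right_neutral)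
    show ?thesis using j k assms(1,2) gfx[of j] gfx[of "i-1"] gfx[of i] assms(3)[OF j] assms(3)[OF k]
      by (cases "j = i-1"; cases "k = i-1"; cases "j = i"; cases "k = i"; simp add: blk_def)
  qed
  finally show "(dg n g * blk n i a b c d * dg n f) $$ (j,k) = blk n i a (g (i-1) * b * f i) (g i * c * f (i-1)) d $$ (j,k)" .
qed (auto simp: blk_def)

lemma conj_mult:
  fixes A B P Q :: "complex mat"
  assumes A: "A \<in> carrier_mat n n" and B: "B \<in> carrier_mat n n"
    and P: "P \<in> carrier_mat n n" and Q: "Q \<in> carrier_mat n n" and PQ: "P * Q = 1\<^sub>m n"
  shows "(Q * A * P) * (Q * B * P) = Q * (A * B) * P"
proof -
  have QA: "Q * A \<in> carrier_mat n n" and BP: "B * P \<in> carrier_mat n n" and QB: "Q * B \<in> carrier_mat n n"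
    and QBP: "Q * B * P \<in> carrier_mat n n" and AB: "A * B \<in> carrier_mat n n"
    using A B P Q by (simp_all add: mult_carrier_mat)
  have "(Q * A * P) * (Q * B * P) = (Q * A) * (P * (Q * (B * P)))"
    using assoc_mult_mat[OF QA P QBP] assoc_mult_mat[OF Q B P] by simp
  also have "P * (Q * (B * P)) = (P * Q) * (B * P)" by (rule assoc_mult_mat[OF P Q BP, symmetric])
  also have "\<dots> = B * P" using PQ left_mult_one_mat[OF BP] by simp
  also have "(Q * A) * (B * P) = Q * (A * (B * P))" by (rule assoc_mult_mat[OF Q A BP])
  also have "A * (B * P) = (A * B) * P" by (rule assoc_mult_mat[OF A B P, symmetric])
  also have "Q * ((A * B) * P) = Q * (A * B) * P" by (rule assoc_mult_mat[OF Q AB P, symmetric])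
  finally show ?thesis .
qed

lemma conj_inv:
  fixes A P Q :: "complex mat"
  assumes A: "A \<in> carrier_mat n n" and iA: "invertible_mat A"
    and P: "P \<in> carrier_mat n n" and Q: "Q \<in> carrier_mat n n" and PQ: "P * Q = 1\<^sub>m n"
    and QP: "Q * P = 1\<^sub>m n"
  shows "invertible_mat (Q * A * P)"
proof -
  obtain B where AB: "A * B = 1\<^sub>m n" and BA: "B * A = 1\<^sub>m (dim_row B)"
    using iA A unfolding invertible_mat_def inverts_mat_def by auto
  have "dim_col (A * B) = n" using AB by simp
  hence "dim_col B = n" by simp
  moreover have "dim_col (B * A) = dim_row B" using BA by simp
  hence "dim_row B = n" using A by simp
  ultimately have B: "B \<in> carrier_mat n n" by auto
  have 1: "(Q * A * P) * (Q * B * P) = 1\<^sub>m n"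
    using conj_mult[OF A B P Q PQ] AB P Q QP by simp
  have 2: "(Q * B * P) * (Q * A * P) = 1\<^sub>m n"
    using conj_mult[OF B A P Q PQ] BA B P Q QP by simp
  show ?thesis unfolding invertible_mat_def inverts_mat_def square_mat.simps
    using 1 2 A B P Q by (intro conjI exI[of _ "Q * B * P"]) auto
qed

lemma UV_rep_conj:
  assumes rep: "UV_rep n c R S"
    and P: "P \<in> carrier_mat n n" and Q: "Q \<in> carrier_mat n n" and PQ: "P * Q = 1\<^sub>m n"
    and QP: "Q * P = 1\<^sub>m n"
    and R': "\<forall>i\<in>{1..n-1}. R' i = Q * R i * P"
    and S': "\<forall>i\<in>{1..n-1}. \<forall>t\<in>{1..c}. S' i t = Q * S i t * P"
  shows "UV_rep n c R' S'"
proof -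
  note cm = conj_mult[OF _ _ P Q PQ]
  note ci = conj_inv[OF _ _ P Q PQ QP]
  have Rc: "\<And>i. i\<in>{1..n-1} \<Longrightarrow> R i \<in> carrier_mat n n" and Ri: "\<And>i. i\<in>{1..n-1} \<Longrightarrow> invertible_mat (R i)"
    and Sc: "\<And>i t. i\<in>{1..n-1} \<Longrightarrow> t\<in>{1..c} \<Longrightarrow> S i t \<in> carrier_mat n n"
    and Si: "\<And>i t. i\<in>{1..n-1} \<Longrightarrow> t\<in>{1..c} \<Longrightarrow> invertible_mat (S i t)"
    using rep unfolding UV_rep_def by auto
  have r1: "\<forall>i\<in>{1..n-1}. R' i \<in> carrier_mat n n \<and> invertible_mat (R' i)"
  proof
    fix i assume i: "i \<in> {1..n-1}"
    show "R' i \<in> carrier_mat n n \<and> invertible_mat (R' i)"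
      using R' i Rc[OF i] Ri[OF i] ci[OF Rc[OF i] Ri[OF i]] P Q by simp
  qed
  have r2: "\<forall>i\<in>{1..n-1}. \<forall>t\<in>{1..c}. S' i t \<in> carrier_mat n n \<and> invertible_mat (S' i t)"
  proof (intro ballI)
    fix i t assume i: "i \<in> {1..n-1}" and t: "t \<in> {1..c}"
    show "S' i t \<in> carrier_mat n n \<and> invertible_mat (S' i t)"
      using S' i t Sc[OF i t] Si[OF i t] ci[OF Sc[OF i t] Si[OF i t]] P Q by simp
  qed
  have r3: "\<forall>i\<in>{1..n-2}. R' i * R' (i+1) * R' i = R' (i+1) * R' i * R' (i+1)"
  proof
    fix i assume i: "i \<in> {1..n-2}"
    hence i1: "i \<in> {1..n-1}" "i+1 \<in> {1..n-1}" by auto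
    have "R i * R (i+1) * R i = R (i+1) * R i * R (i+1)" using rep i unfolding UV_rep_def by auto
    thus "R' i * R' (i+1) * R' i = R' (i+1) * R' i * R' (i+1)"
      using i1 R' Rc[OF i1(1)] Rc[OF i1(2)] by (simp add: cm)
  qed
  have r4: "\<forall>i\<in>{1..n-1}. \<forall>j\<in>{1..n-1}. (i + 2 \<le> j \<or> j + 2 \<le> i) \<longrightarrow> R' i * R' j = R' j * R' i"
  proof (intro ballI impI)
    fix i j assume i: "i \<in> {1..n-1}" and j: "j \<in> {1..n-1}" and d: "i + 2 \<le> j \<or> j + 2 \<le> i"
    have "R i * R j = R j * R i" using rep i j d unfolding UV_rep_def by auto
    thus "R' i * R' j = R' j * R' i" using i j R' Rc[OF i] Rc[OF j] by (simp add: cm)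
  qed
  have r5: "\<forall>i\<in>{1..n-1}. R' i * R' i = 1\<^sub>m n"
  proof
    fix i assume i: "i \<in> {1..n-1}"
    have "R i * R i = 1\<^sub>m n" using rep i unfolding UV_rep_def by auto
    hence "Q * (R i * R i) * P = 1\<^sub>m n" by (simp only: QP right_mult_one_mat[OF Q])
    thus "R' i * R' i = 1\<^sub>m n" by (simp only: R'[rule_format, OF i] cm[OF Rc[OF i] Rc[OF i]])
  qed
  have r6: "\<forall>i\<in>{1..n-1}. \<forall>j\<in>{1..n-1}. \<forall>t\<in>{1..c}. \<forall>l\<in>{1..c}.
        (i + 2 \<le> j \<or> j + 2 \<le> i) \<longrightarrow> S' i t * S' j l = S' j l * S' i t"
  proof (intro ballI impI)
    fix i j t l assume i: "i \<in> {1..n-1}" and j: "j \<in> {1..n-1}" and t: "t \<in> {1..c}" and l: "l \<in> {1..c}"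
      and d: "i + 2 \<le> j \<or> j + 2 \<le> i"
    have "S i t * S j l = S j l * S i t" using rep i j t l d unfolding UV_rep_def by auto
    thus "S' i t * S' j l = S' j l * S' i t" using i j t l S' Sc[OF i t] Sc[OF j l] by (simp add: cm)
  qed
  have r7: "\<forall>i\<in>{1..n-1}. \<forall>j\<in>{1..n-1}. \<forall>t\<in>{1..c}.
        (i + 2 \<le> j \<or> j + 2 \<le> i) \<longrightarrow> S' i t * R' j = R' j * S' i t"
  proof (intro ballI impI)
    fix i j t assume i: "i \<in> {1..n-1}" and j: "j \<in> {1..n-1}" and t: "t \<in> {1..c}"
      and d: "i + 2 \<le> j \<or> j + 2 \<le> i"
    have "S i t * R j = R j * S i t" using rep i j t d unfolding UV_rep_def by auto
    thus "S' i t * R' j = R' j * S' i t" using i j t S' R' Sc[OF i t] Rc[OF j] by (simp add: cm)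
  qed
  have r8: "\<forall>i\<in>{1..n-2}. \<forall>t\<in>{1..c}. R' i * R' (i+1) * S' i t = S' (i+1) t * R' i * R' (i+1)"
  proof (intro ballI)
    fix i t assume i: "i \<in> {1..n-2}" and t: "t \<in> {1..c}"
    hence i1: "i \<in> {1..n-1}" "i+1 \<in> {1..n-1}" by auto
    have "R i * R (i+1) * S i t = S (i+1) t * R i * R (i+1)" using rep i t unfolding UV_rep_def by auto
    thus "R' i * R' (i+1) * S' i t = S' (i+1) t * R' i * R' (i+1)"
      using i1 t R' S' Rc[OF i1(1)] Rc[OF i1(2)] Sc[OF i1(1) t] Sc[OF i1(2) t] by (simp add: cm)
  qed
  show ?thesis unfolding UV_rep_def using r1 r2 r3 r4 r5 r6 r7 r8 by blast
qed

theorem lemma3p2: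
  fixes n c :: nat and r2 :: complex and s1 s2 s3 s4 :: "nat \<Rightarrow> complex"
  assumes "n \<ge> 3" and "c \<ge> 1"
    and "r2 \<noteq> 0"
    and "\<forall>t\<in>{1..c}. s1 t * s4 t - s2 t * s3 t \<noteq> 0"
    and "UV_rep n c (\<lambda>i. blk n i 0 r2 (1 / r2) 0) (\<lambda>i t. blk n i (s1 t) (s2 t) (s3 t) (s4 t))"
  shows "\<exists>s1' s2' s3' s4' :: nat \<Rightarrow> complex.
           (\<forall>t\<in>{1..c}. s1' t * s4' t - s2' t * s3' t \<noteq> 0) \<and>
           UV_rep n c (\<lambda>i. blk n i 0 1 1 0) (\<lambda>i t. blk n i (s1' t) (s2' t) (s3' t) (s4' t)) \<and>
           UV_equiv n c (\<lambda>i. blk n i 0 r2 (1 / r2) 0) (\<lambda>i t. blk n i (s1 t) (s2 t) (s3 t) (s4 t))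
                        (\<lambda>i. blk n i 0 1 1 0) (\<lambda>i t. blk n i (s1' t) (s2' t) (s3' t) (s4' t))"
proof -
  define g :: "nat \<Rightarrow> complex" where "g = (\<lambda>k. r2 ^ k)"
  define f :: "nat \<Rightarrow> complex" where "f = (\<lambda>k. (1 / r2) ^ k)"
  have gf: "\<And>k. g k * f k = 1" "\<And>k. f k * g k = 1"
    using assms(3) by (simp_all add: g_def f_def power_one_over field_simps)
  define P where "P = dg n f"
  define Q where "Q = dg n g"
  have P: "P \<in> carrier_mat n n" and Q: "Q \<in> carrier_mat n n" by (simp_all add: P_def Q_def)
  have dgm: "dg n h * dg n h' = dg n (\<lambda>k. h k * h' k)" for h h'
  proof (rule eq_matI)
    fix i j assume "i < dim_row (dg n (\<lambda>k. h k * h' k))" "j < dim_col (dg n (\<lambda>k. h k * h' k))"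
    hence i: "i < n" and j: "j < n" by auto
    show "(dg n h * dg n h') $$ (i, j) = dg n (\<lambda>k. h k * h' k) $$ (i, j)"
      unfolding dg_left[OF dg_carrier i j] using i j by (simp add: dg_entry)
  qed auto
  have PQ: "P * Q = 1\<^sub>m n" unfolding P_def Q_def dgm using gf
    by (intro eq_matI) (simp_all add: dg_entry)
  have QP: "Q * P = 1\<^sub>m n" unfolding P_def Q_def dgm using gf
    by (intro eq_matI) (simp_all add: dg_entry)
  have e1: "g (i-1) * r2 * f i = 1" "g i * f (i-1) / r2 = 1" if i1: "1 \<le> i" for i
  proof -
    obtain m where m: "i = Suc m" using i1 by (cases i) auto
    show "g (i-1) * r2 * f i = 1" "g i * f (i-1) / r2 = 1"
      using assms(3) by (simp_all add: m g_def f_def power_one_over field_simps)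
  qed
  have e2: "g (i-1) * x * f i = x / r2" "g i * x * f (i-1) = x * r2" if i1: "1 \<le> i" for i x
  proof -
    obtain m where m: "i = Suc m" using i1 by (cases i) auto
    show "g (i-1) * x * f i = x / r2" "g i * x * f (i-1) = x * r2"
      using assms(3) by (simp_all add: m g_def f_def power_one_over field_simps)
  qed
  have cR: "\<forall>i\<in>{1..n-1}. blk n i 0 1 1 0 = Q * blk n i 0 r2 (1 / r2) 0 * P"
  proof
    fix i assume "i \<in> {1..n-1}"
    hence a: "1 \<le> i" "i < n" by auto
    show "blk n i 0 1 1 0 = Q * blk n i 0 r2 (1 / r2) 0 * P"
      unfolding P_def Q_def conj_blk[OF a gf(1)] using e1[OF a(1)] by simp
  qed
  have cS: "\<forall>i\<in>{1..n-1}. \<forall>t\<in>{1..c}. blk n i (s1 t) (s2 t / r2) (s3 t * r2) (s4 t)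
             = Q * blk n i (s1 t) (s2 t) (s3 t) (s4 t) * P"
  proof (intro ballI)
    fix i t assume "i \<in> {1..n-1}"
    hence a: "1 \<le> i" "i < n" by auto
    show "blk n i (s1 t) (s2 t / r2) (s3 t * r2) (s4 t) = Q * blk n i (s1 t) (s2 t) (s3 t) (s4 t) * P"
      unfolding P_def Q_def conj_blk[OF a gf(1)] e2[OF a(1)] ..
  qed
  show ?thesis
  proof (intro exI conjI)
    show "\<forall>t\<in>{1..c}. s1 t * s4 t - (s2 t / r2) * (s3 t * r2) \<noteq> 0"
      using assms(3,4) by simp
    show "UV_rep n c (\<lambda>i. blk n i 0 1 1 0) (\<lambda>i t. blk n i (s1 t) (s2 t / r2) (s3 t * r2) (s4 t))"
      by (rule UV_rep_conj[OF assms(5) P Q PQ QP]) (use cR cS in auto)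
    show "UV_equiv n c (\<lambda>i. blk n i 0 r2 (1 / r2) 0) (\<lambda>i t. blk n i (s1 t) (s2 t) (s3 t) (s4 t))
                        (\<lambda>i. blk n i 0 1 1 0) (\<lambda>i t. blk n i (s1 t) (s2 t / r2) (s3 t * r2) (s4 t))"
      unfolding UV_equiv_def using P Q PQ QP cR cS by blast
  qed
qed

end
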